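(* Let $\rho>1$, $0<\kappa<\kappa^c_\rho$ and $d\ge2$. Then $E(N_0)=\kappa^d$ and, for every integer $k\ge1$, $$E(N_k)\le\left(\frac{\kappa^{k+1}(1+\rho)^2}{4\rho}\right)^d.$$
   Context: Let $v_d$ be the volume of the unit Euclidean ball of $\mathbb{R}^d$. Let $\chi_1,\chi_\rho$ be independent homogeneous Poisson point processes on $\mathbb{R}^d$ with intensities $\lambda_1=\kappa^d/(v_d2^d)$ and $\lambda_\rho=\kappa^d/(v_d2^d\rho^d)$. Define $N_0=\#\{x_1\in\chi_\rho:\|x_1\|<2\rho\}$ and, for $k\ge1$, $N_k$ as the number of $x_{k+1}\in\chi_\rho$ for which there exist distinct $x_1,\dots,x_k\in\chi_1$ with $\|x_1\|<1+\rho$, $\|x_{i+1}-x_i\|<2$ for $1\le i\le k-1$, and $\|x_{k+1}-x_k\|<1+\rho$. $\kappa^c_\rho$ is defined as follows: for $k\ge1$ set $r_1=r_{k+1}=1+\rho$, $r_i=2$ for $2\le i\le k$; for $(a_i)_{2\le i\le k+1}\in[0,1)^k$ let $d_1=1+\rho$, $d_i^2=d_{i-1}^2+2r_ia_id_{i-1}+r_i^2$ ($d_i>0$), $\mathcal D(a_2,\dots,a_{k+1})=d_{k+1}$; $\kappa^c_\rho(k)=\inf_{0\le a_i<1}\max\big((4\rho/((1+\rho)^2\sqrt{\prod_{2\le i\le k+1}(1-a_i^2)}))^{1/(k+1)},\,2\rho/\mathcal D(a_2,\dots,a_{k+1})\big)$ and $\kappa^c_\rho=\inf_{k\ge1}\kappa^c_\rho(k)$.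 *)

theory Defs
  imports "HOL-Probability.Probability"
begin

definition unit_ball_vol :: "('d::finite) itself \<Rightarrow> real" where
  "unit_ball_vol _ = measure lborel (ball (0::real^'d) 1)"

(* Two independent homogeneous Poisson point processes X, Y on real^'d with
   intensities l1, l2, realised as random locally finite point sets on the
   probability space M: counts on disjoint bounded Borel sets are jointly
   independent (over both processes and all sets) and Poisson distributed
   with mean intensity * Lebesgue volume. *)
definition indep_PPP2 ::
  "'a measure \<Rightarrow> ('a \<Rightarrow> (real^'d::finite) set) \<Rightarrow> ('a \<Rightarrow> (real^'d) set)
     \<Rightarrow> real \<Rightarrow> real \<Rightarrow> bool" where
  "indep_PPP2 M X Y l1 l2 \<longleftrightarrow>
     prob_space M \<and>
     (\<forall>\<omega>\<in>space M. \<forall>B. bounded B \<longrightarrow> finite (X \<omega> \<inter> B) \<and> finite (Y \<omega> \<inter> B)) \<and>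
     (\<forall>(n::nat) (A::nat \<Rightarrow> (real^'d) set).
        (\<forall>i<n. A i \<in> sets lborel \<and> bounded (A i)) \<and> disjoint_family_on A {..<n} \<longrightarrow>
          prob_space.indep_vars M (\<lambda>_. count_space (UNIV::nat set))
             (\<lambda>(j::bool, i) \<omega>. card ((if j then X \<omega> else Y \<omega>) \<inter> A i)) (UNIV \<times> {..<n})
        \<and> (\<forall>i<n. \<forall>m::nat.
              measure M {\<omega>\<in>space M. card (X \<omega> \<inter> A i) = m}
                = (l1 * measure lborel (A i)) ^ m / fact m * exp (- (l1 * measure lborel (A i)))
            \<and> measure M {\<omega>\<in>space M. card (Y \<omega> \<inter> A i) = m}
                = (l2 * measure lborel (A i)) ^ m / fact m * exp (- (l2 * measure lborel (A i)))))"

definition N0 :: "real \<Rightarrow> (real^'d::finite) set \<Rightarrow> nat" where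
  "N0 \<rho> Xr = card {y \<in> Xr. norm y < 2 * \<rho>}"

definition Nk :: "real \<Rightarrow> nat \<Rightarrow> (real^'d::finite) set \<Rightarrow> (real^'d) set \<Rightarrow> nat" where
  "Nk \<rho> k X1 Xr = card {y \<in> Xr. \<exists>x::nat \<Rightarrow> real^'d.
       inj_on x {1..k} \<and> (\<forall>i\<in>{1..k}. x i \<in> X1) \<and> norm (x 1) < 1 + \<rho> \<and>
       (\<forall>i\<in>{1..k-1}. norm (x (i+1) - x i) < 2) \<and> norm (y - x k) < 1 + \<rho>}"

definition rr :: "real \<Rightarrow> nat \<Rightarrow> nat \<Rightarrow> real" where
  "rr \<rho> k i = (if i = 1 \<or> i = k + 1 then 1 + \<rho> else 2)"

fun dd :: "real \<Rightarrow> nat \<Rightarrow> (nat \<Rightarrow> real) \<Rightarrow> nat \<Rightarrow> real" where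
  "dd \<rho> k a 0 = 0"
| "dd \<rho> k a (Suc 0) = 1 + \<rho>"
| "dd \<rho> k a (Suc (Suc i)) =
     sqrt ((dd \<rho> k a (Suc i))\<^sup>2 + 2 * rr \<rho> k (Suc (Suc i)) * a (Suc (Suc i)) * dd \<rho> k a (Suc i)
           + (rr \<rho> k (Suc (Suc i)))\<^sup>2)"

definition DD :: "real \<Rightarrow> nat \<Rightarrow> (nat \<Rightarrow> real) \<Rightarrow> real" where
  "DD \<rho> k a = dd \<rho> k a (k + 1)"

definition kappa_c_k :: "real \<Rightarrow> nat \<Rightarrow> real" where
  "kappa_c_k \<rho> k = (INF a \<in> {a. \<forall>i\<in>{2..k+1}. 0 \<le> a i \<and> a i < 1}.
      max ((4 * \<rho> / ((1 + \<rho>)\<^sup>2 * sqrt (\<Prod>i\<in>{2..k+1}. 1 - (a i)\<^sup>2))) powr (1 / real (k + 1)))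
          (2 * \<rho> / DD \<rho> k a))"

definition kappa_c :: "real \<Rightarrow> real" where
  "kappa_c \<rho> = (INF k \<in> {1::nat..}. kappa_c_k \<rho> k)"

end

theory Submission
  imports Defs
begin

lemma poisson_mean_sums:
  fixes \<mu> :: real
  shows "(\<lambda>m. real m * (\<mu> ^ m / fact m * exp (- \<mu>))) sums \<mu>"
proof -
  have "(\<lambda>n. \<mu> ^ n / fact n) sums exp \<mu>"
    using exp_converges[of \<mu>] by (simp add: divide_inverse mult.commute)
  then have 1: "(\<lambda>n. (\<mu> * exp (- \<mu>)) * (\<mu> ^ n / fact n)) sums ((\<mu> * exp (- \<mu>)) * exp \<mu>)"
    by (rule sums_mult)
  have E: "(\<lambda>n. (\<mu> * exp (- \<mu>)) * (\<mu> ^ n / fact n)) = (\<lambda>n. real (Suc n) * (\<mu> ^ Suc n / fact (Suc n) * exp (- \<mu>)))"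
  proof
    fix n
    have "fact (Suc n) = real (Suc n) * (fact n :: real)" by simp
    then show "(\<mu> * exp (- \<mu>)) * (\<mu> ^ n / fact n) = real (Suc n) * (\<mu> ^ Suc n / fact (Suc n) * exp (- \<mu>))" by (simp add: exp_minus)
  qed
  have E2: "(\<mu> * exp (- \<mu>)) * exp \<mu> = \<mu>" by (simp add: exp_minus)
  from 1 have "(\<lambda>n. real (Suc n) * (\<mu> ^ Suc n / fact (Suc n) * exp (- \<mu>))) sums \<mu>"
    unfolding E E2 .
  then show ?thesis by (subst (asm) sums_Suc_iff) simp
qed

lemma ppp_prob: "indep_PPP2 M X Y l1 l2 \<Longrightarrow> prob_space M"
  by (simp add: indep_PPP2_def)

lemma ppp_single:
  assumes H: "indep_PPP2 M X Y l1 l2" and A: "A \<in> sets lborel" "bounded A"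
  shows "(\<lambda>\<omega>. card (X \<omega> \<inter> A)) \<in> measurable M (count_space UNIV)"
    and "(\<lambda>\<omega>. card (Y \<omega> \<inter> A)) \<in> measurable M (count_space UNIV)"
    and "\<And>m. measure M {\<omega>\<in>space M. card (X \<omega> \<inter> A) = m}
              = (l1 * measure lborel A) ^ m / fact m * exp (- (l1 * measure lborel A))"
    and "\<And>m. measure M {\<omega>\<in>space M. card (Y \<omega> \<inter> A) = m}
              = (l2 * measure lborel A) ^ m / fact m * exp (- (l2 * measure lborel A))"
proof -
  interpret prob_space M using H by (simp add: indep_PPP2_def)
  have D: "(\<forall>i<1. (\<lambda>_::nat. A) i \<in> sets lborel \<and> bounded ((\<lambda>_::nat. A) i)) \<and> disjoint_family_on (\<lambda>_::nat. A) {..<1}"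
    using A by (simp add: disjoint_family_on_def)
  note H3 = conjunct2[OF conjunct2[OF H[unfolded indep_PPP2_def]]]
  note H4 = mp[OF spec[OF spec[OF H3, of 1], of "\<lambda>_. A"] D]
  note iv = conjunct1[OF H4]
  have rv: "random_variable (count_space UNIV) (\<lambda>\<omega>. card ((if j then X \<omega> else Y \<omega>) \<inter> A))" for j
    using iv[unfolded indep_vars_def] by (auto dest: bspec[of _ _ "(j,0)"])
  show "(\<lambda>\<omega>. card (X \<omega> \<inter> A)) \<in> measurable M (count_space UNIV)"
    "(\<lambda>\<omega>. card (Y \<omega> \<inter> A)) \<in> measurable M (count_space UNIV)"
    using rv[of True] rv[of False] by auto
  note pm = conjunct2[OF H4]
  show "\<And>m. measure M {\<omega>\<in>space M. card (X \<omega> \<inter> A) = m}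
              = (l1 * measure lborel A) ^ m / fact m * exp (- (l1 * measure lborel A))"
    "\<And>m. measure M {\<omega>\<in>space M. card (Y \<omega> \<inter> A) = m}
              = (l2 * measure lborel A) ^ m / fact m * exp (- (l2 * measure lborel A))"
    using pm by auto
qed

lemma mean_from_poisson:
  fixes f :: "'a \<Rightarrow> nat"
  assumes P: "prob_space M" and f: "f \<in> measurable M (count_space UNIV)" and mu: "\<mu> \<ge> 0"
    and pm: "\<And>m. measure M {\<omega>\<in>space M. f \<omega> = m} = \<mu> ^ m / fact m * exp (- \<mu>)"
  shows "(\<integral>\<^sup>+ \<omega>. ennreal (real (f \<omega>)) \<partial>M) = ennreal \<mu>"
proof -
  interpret prob_space M by fact
  have S: "{\<omega>\<in>space M. f \<omega> = m} \<in> sets M" for m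
  proof -
    have "{\<omega>\<in>space M. f \<omega> = m} = f -` {m} \<inter> space M" by auto
    then show ?thesis using measurable_sets[OF f, of "{m}"] by simp
  qed
  have eq: "ennreal (real (f \<omega>)) = (\<Sum>m. ennreal (real m) * indicator {\<omega>\<in>space M. f \<omega> = m} \<omega>)"
    if "\<omega> \<in> space M" for \<omega>
    by (subst suminf_finite[of "{f \<omega>}"]) (auto simp: that)
  have "(\<integral>\<^sup>+ \<omega>. ennreal (real (f \<omega>)) \<partial>M)
      = (\<integral>\<^sup>+ \<omega>. (\<Sum>m. ennreal (real m) * indicator {\<omega>\<in>space M. f \<omega> = m} \<omega>) \<partial>M)"
    by (rule nn_integral_cong) (simp add: eq)
  also have "\<dots> = (\<Sum>m. \<integral>\<^sup>+ \<omega>. ennreal (real m) * indicator {\<omega>\<in>space M. f \<omega> = m} \<omega> \<partial>M)"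
    by (rule nn_integral_suminf) (use S in auto)
  also have "\<dots> = (\<Sum>m. ennreal (real m) * ennreal (\<mu> ^ m / fact m * exp (- \<mu>)))"
    using S by (simp only: nn_integral_cmult_indicator emeasure_eq_measure pm)
  also have "\<dots> = (\<Sum>m. ennreal (real m * (\<mu> ^ m / fact m * exp (- \<mu>))))"
    using mu by (intro suminf_cong, subst ennreal_mult) auto
  also have "\<dots> = ennreal \<mu>"
    using poisson_mean_sums[of \<mu>] mu
    by (subst suminf_ennreal2) (auto simp: sums_iff)
  finally show ?thesis .
qed

lemma ppp_mean:
  assumes H: "indep_PPP2 M X Y l1 l2" and l: "l1 \<ge> 0" "l2 \<ge> 0"
    and A: "A \<in> sets lborel" "bounded A"
  shows "(\<integral>\<^sup>+ \<omega>. ennreal (real (card (X \<omega> \<inter> A))) \<partial>M) = ennreal (l1 * measure lborel A)"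
    and "(\<integral>\<^sup>+ \<omega>. ennreal (real (card (Y \<omega> \<inter> A))) \<partial>M) = ennreal (l2 * measure lborel A)"
  using mean_from_poisson[OF ppp_prob[OF H] ppp_single(1)[OF H A], of "l1 * measure lborel A"]
        mean_from_poisson[OF ppp_prob[OF H] ppp_single(2)[OF H A], of "l2 * measure lborel A"]
        ppp_single(3,4)[OF H A] l by auto

lemma ppp_prod_mean:
  fixes n :: nat and A :: "nat \<Rightarrow> (real^'d::finite) set"
  assumes H: "indep_PPP2 M X Y l1 l2" and l: "l1 \<ge> 0" "l2 \<ge> 0"
    and A: "\<forall>i<n. A i \<in> sets lborel \<and> bounded (A i)" "disjoint_family_on A {..<n}"
    and I: "I \<subseteq> {..<n}" and g: "g < n"
  shows "(\<integral>\<^sup>+\<omega>. (\<Prod>i\<in>I. ennreal (real (card (X \<omega> \<inter> A i)))) * ennreal (real (card (Y \<omega> \<inter> A g))) \<partial>M)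
       = (\<Prod>i\<in>I. ennreal (l1 * measure lborel (A i))) * ennreal (l2 * measure lborel (A g))"
proof -
  interpret prob_space M using H by (simp add: indep_PPP2_def)
  note H3 = conjunct2[OF conjunct2[OF H[unfolded indep_PPP2_def]]]
  note H4 = mp[OF spec[OF spec[OF H3, of n], of A] conjI[OF A]]
  note iv = conjunct1[OF H4]
  define W where "W = (\<lambda>(j::bool, i::nat) \<omega>. card ((if j then X \<omega> else Y \<omega>) \<inter> A i))"
  define J where "J = Pair True ` I \<union> {(False, g)}"
  have fin: "finite J" using I unfolding J_def by (auto intro: finite_subset)
  have iv2: "indep_vars (\<lambda>_. count_space UNIV) W J"
    by (rule indep_vars_subset[OF iv[folded W_def]]) (use I g in \<open>auto simp: J_def\<close>)
  have iv3: "indep_vars (\<lambda>_. borel) (\<lambda>p \<omega>. ennreal (real (W p \<omega>))) J"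
    by (rule indep_vars_compose2[OF iv2]) simp
  have "(\<integral>\<^sup>+\<omega>. (\<Prod>p\<in>J. ennreal (real (W p \<omega>))) \<partial>M) = (\<Prod>p\<in>J. \<integral>\<^sup>+\<omega>. ennreal (real (W p \<omega>)) \<partial>M)"
    by (rule indep_vars_nn_integral[OF fin iv3]) simp
  moreover have "(\<Prod>p\<in>J. F p) = (\<Prod>i\<in>I. F (True, i)) * F (False, g)" for F :: "bool \<times> nat \<Rightarrow> ennreal"
  proof -
    have "(\<Prod>p\<in>J. F p) = (\<Prod>p\<in>Pair True ` I. F p) * F (False, g)"
      unfolding J_def using I by (subst prod.union_disjoint) (auto intro: finite_subset)
    also have "(\<Prod>p\<in>Pair True ` I. F p) = (\<Prod>i\<in>I. F (True, i))"
      by (subst prod.reindex) (auto simp: inj_on_def)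
    finally show ?thesis .
  qed
  ultimately have "(\<integral>\<^sup>+\<omega>. (\<Prod>i\<in>I. ennreal (real (W (True, i) \<omega>))) * ennreal (real (W (False, g) \<omega>)) \<partial>M)
     = (\<Prod>i\<in>I. \<integral>\<^sup>+\<omega>. ennreal (real (W (True, i) \<omega>)) \<partial>M) * (\<integral>\<^sup>+\<omega>. ennreal (real (W (False, g) \<omega>)) \<partial>M)"
    by simp
  moreover have "(\<integral>\<^sup>+\<omega>. ennreal (real (W (True, i) \<omega>)) \<partial>M) = ennreal (l1 * measure lborel (A i))" if "i \<in> I" for i
    using ppp_mean(1)[OF H l, of "A i"] A I that by (auto simp: W_def)
  moreover have "(\<integral>\<^sup>+\<omega>. ennreal (real (W (False, g) \<omega>)) \<partial>M) = ennreal (l2 * measure lborel (A g))"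
    using ppp_mean(2)[OF H l, of "A g"] A g by (auto simp: W_def)
  ultimately show ?thesis by (simp add: W_def)
qed

definition cube :: "nat \<Rightarrow> ('d::finite \<Rightarrow> int) \<Rightarrow> (real^'d) set" where
  "cube n z = {x. \<forall>j. real_of_int (z j) / 2^n \<le> x$j \<and> x$j < (real_of_int (z j) + 1) / 2^n}"

definition cidx :: "nat \<Rightarrow> real^'d::finite \<Rightarrow> ('d \<Rightarrow> int)" where
  "cidx n x = (\<lambda>j. \<lfloor>x$j * 2^n\<rfloor>)"

definition corner :: "nat \<Rightarrow> ('d::finite \<Rightarrow> int) \<Rightarrow> real^'d" where
  "corner n z = (\<chi> j. real_of_int (z j) / 2^n)"

lemma cube_iff: "x \<in> cube n z \<longleftrightarrow> z = cidx n x"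
proof -
  have "(real_of_int (z j) / 2^n \<le> x$j \<and> x$j < (real_of_int (z j) + 1) / 2^n) \<longleftrightarrow> z j = \<lfloor>x$j * 2^n\<rfloor>" for j
  proof -
    have "(real_of_int (z j) / 2^n \<le> x$j \<and> x$j < (real_of_int (z j) + 1) / 2^n)
       \<longleftrightarrow> (real_of_int (z j) \<le> x$j * 2^n \<and> x$j * 2^n < real_of_int (z j) + 1)"
      by (simp add: divide_simps)
    also have "\<dots> \<longleftrightarrow> z j = \<lfloor>x$j * 2^n\<rfloor>" by (metis floor_eq_iff)
    finally show ?thesis .
  qed
  then show ?thesis by (auto simp: cube_def cidx_def fun_eq_iff)
qed

lemma cidx_in: "x \<in> cube n (cidx n x)"
  by (simp add: cube_iff)

lemma cube_disj: "z \<noteq> z' \<Longrightarrow> cube n z \<inter> cube n z' = {}"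
  by (auto simp: cube_iff)

lemma corner_in: "corner n z \<in> cube n z"
  by (simp add: cube_def corner_def divide_simps)

lemma cube_diam:
  fixes x :: "real^'d::finite"
  assumes "x \<in> cube n z" "y \<in> cube n z"
  shows "norm (x - y) \<le> real CARD('d) / 2^n"
proof -
  have "\<bar>(x - y)$j\<bar> \<le> 1 / 2^n" for j
  proof -
    from assms have "real_of_int (z j) / 2^n \<le> x$j" "x$j < (real_of_int (z j) + 1) / 2^n"
      "real_of_int (z j) / 2^n \<le> y$j" "y$j < (real_of_int (z j) + 1) / 2^n"
      by (auto simp: cube_def)
    moreover have "(real_of_int (z j) + 1) / 2^n = real_of_int (z j) / 2^n + 1 / 2^n"
      by (simp add: add_divide_distrib)
    ultimately show ?thesis by simp
  qed
  then have "(\<Sum>j\<in>UNIV. \<bar>(x - y)$j\<bar>) \<le> (\<Sum>j\<in>(UNIV::'d set). 1 / 2^n)"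
    by (intro sum_mono) auto
  then show ?thesis using norm_le_l1_cart[of "x - y"] by simp
qed

lemma cube_sets: "cube n z \<in> sets lborel"
  unfolding cube_def by measurable

lemma cube_sets_borel: "cube n z \<in> sets borel"
  using cube_sets[of n z] by simp

lemma cube_bounded: fixes z :: "'d::finite \<Rightarrow> int" shows "bounded (cube n z)"
proof -
  have "norm (x - corner n z) \<le> real CARD('d) / 2^n" if "x \<in> cube n z" for x :: "real^'d"
    using cube_diam[OF that corner_in] .
  then have "cube n z \<subseteq> cball (corner n z) (real CARD('d) / 2^n)"
    by (auto simp: dist_norm norm_minus_commute)
  then show ?thesis using bounded_cball bounded_subset by blast
qed

lemma finite_cubes_in_ball: "finite {z::'d::finite \<Rightarrow> int. cube n z \<subseteq> ball 0 R}"
proof -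
  define K where "K = \<lceil>R * 2^n\<rceil>"
  have "{z::'d \<Rightarrow> int. cube n z \<subseteq> ball 0 R} \<subseteq> Pi\<^sub>E UNIV (\<lambda>_. {-K..K})"
  proof (clarsimp simp: PiE_UNIV_domain)
    fix z :: "'d \<Rightarrow> int" and j assume sub: "cube n z \<subseteq> ball 0 R"
    have "norm (corner n z) < R" using sub corner_in[of n z] by auto
    then have "\<bar>real_of_int (z j) / 2^n\<bar> < R"
      using component_le_norm_cart[of "corner n z" j] by (simp add: corner_def)
    then have "\<bar>real_of_int (z j)\<bar> < R * 2^n" by (simp add: divide_simps abs_divide)
    then have "\<bar>real_of_int (z j)\<bar> \<le> real_of_int K" unfolding K_def
      by (meson le_of_int_ceiling less_le_trans nless_le not_le)
    then show "- K \<le> z j \<and> z j \<le> K" by linarith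
  qed
  moreover have "finite (Pi\<^sub>E (UNIV::'d set) (\<lambda>_. {-K..K}))" by (intro finite_PiE) auto
  ultimately show ?thesis by (rule finite_subset)
qed

lemma sum_cubes_le_ball:
  fixes c :: "real^'d::finite"
  assumes U: "finite U" and sub: "\<And>u. u \<in> U \<Longrightarrow> cube n u \<subseteq> ball c r"
  shows "(\<Sum>u\<in>U. measure lborel (cube n u)) \<le> measure lborel (ball c r)"
proof -
  have "(\<Sum>u\<in>U. measure lborel (cube n u)) = measure lborel (\<Union>u\<in>U. cube n u)"
  proof (rule measure_finite_Union[symmetric])
    show "(\<lambda>u. cube n u) ` U \<subseteq> sets lborel" using cube_sets by blast
    show "emeasure lborel (cube n u) \<noteq> \<infinity>" for u
      using emeasure_bounded_finite[OF cube_bounded[of n u]] by simp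
  qed (use U in \<open>auto simp: disjoint_family_on_def cube_disj\<close>)
  also have "\<dots> \<le> measure lborel (ball c r)"
    using sets.finite_UN[OF U, of "cube n" lborel] cube_sets
    by (intro measure_mono_fmeasurable) (use sub U in \<open>auto intro!: fmeasurableI emeasure_bounded_finite simp: cube_sets\<close>)
  finally show ?thesis .
qed

lemma ball_vol:
  fixes c :: "real^'d::finite"
  assumes "r \<ge> 0"
  shows "measure lborel (ball c r) = unit_ball_vol TYPE('d) * r ^ CARD('d)"
  using content_ball[of r c] content_ball[of 1 "0::real^'d"] assms
  by (simp add: unit_ball_vol_def)

lemma unit_ball_vol_pos': "unit_ball_vol TYPE('d::finite) > 0"
  using content_ball_gt_0_iff[of "0::real^'d" 1] by (simp add: unit_ball_vol_def)

definition near :: "nat \<Rightarrow> real \<Rightarrow> ('d::finite \<Rightarrow> int) \<Rightarrow> ('d \<Rightarrow> int) \<Rightarrow> bool" where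
  "near n r u v \<longleftrightarrow> (\<forall>p\<in>cube n u. \<forall>q\<in>cube n v. norm (q - p) < r)"

definition startc :: "nat \<Rightarrow> real \<Rightarrow> ('d::finite \<Rightarrow> int) \<Rightarrow> bool" where
  "startc n r u \<longleftrightarrow> (\<forall>p\<in>cube n u. norm p < r)"

definition chainL :: "nat \<Rightarrow> real \<Rightarrow> nat \<Rightarrow> ('d::finite \<Rightarrow> int) list set" where
  "chainL n \<rho> m = {zs. length zs = m \<and> startc n (1 + \<rho>) (zs!0) \<and> (\<forall>i. Suc i < m \<longrightarrow> near n 2 (zs!i) (zs!Suc i))}"

lemma near_ball: "near n r u v \<Longrightarrow> cube n v \<subseteq> ball (corner n u) r"
  using corner_in[of n u] by (auto simp: near_def dist_norm) (metis norm_minus_commute)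

lemma startc_ball: "startc n r u \<Longrightarrow> cube n u \<subseteq> ball 0 r"
  by (auto simp: startc_def)

lemma ball_sub0: "ball (c::'a::real_normed_vector) r \<subseteq> ball 0 (norm c + r)"
  by (auto simp: dist_norm) (metis add_strict_left_mono norm_minus_commute norm_triangle_sub order_le_less_trans)

lemma finite_near: "finite {v. near n r u v}"
  by (rule finite_subset[OF _ finite_cubes_in_ball[of n "norm (corner n u) + r"]])
     (use near_ball ball_sub0 in blast)

lemma finite_startc: "finite {v. startc n r v}"
  by (rule finite_subset[OF _ finite_cubes_in_ball[of n r]]) (use startc_ball in blast)

lemma sum_near_le:
  fixes u :: "'d::finite \<Rightarrow> int"
  assumes "r \<ge> 0"
  shows "(\<Sum>v\<in>{v. near n r u v}. measure lborel (cube n v)) \<le> unit_ball_vol TYPE('d) * r ^ CARD('d)"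
proof -
  have "(\<Sum>v\<in>{v. near n r u v}. measure lborel (cube n v)) \<le> measure lborel (ball (corner n u) r)"
    by (rule sum_cubes_le_ball[OF finite_near]) (rule near_ball, simp)
  then show ?thesis using ball_vol[OF assms, of "corner n u"] by simp
qed

lemma sum_startc_le:
  fixes u :: "'d::finite \<Rightarrow> int"
  assumes "r \<ge> 0"
  shows "(\<Sum>v\<in>{v::'d \<Rightarrow> int. startc n r v}. measure lborel (cube n v)) \<le> unit_ball_vol TYPE('d) * r ^ CARD('d)"
proof -
  have "(\<Sum>v\<in>{v::'d \<Rightarrow> int. startc n r v}. measure lborel (cube n v)) \<le> measure lborel (ball (0::real^'d) r)"
    by (rule sum_cubes_le_ball[OF finite_startc]) (rule startc_ball, simp)
  then show ?thesis using ball_vol[OF assms, of "0::real^'d"] by simp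
qed

lemma chain_ball:
  assumes "zs \<in> chainL n \<rho> m"
  shows "i < m \<Longrightarrow> cube n (zs!i) \<subseteq> ball 0 (1 + \<rho> + 2 * real i)"
proof (induction i)
  case 0
  then show ?case using assms(1) startc_ball by (auto simp: chainL_def)
next
  case (Suc i)
  then have nr: "near n 2 (zs!i) (zs!Suc i)" using assms(1) by (auto simp: chainL_def)
  have c: "norm (corner n (zs!i)) < 1 + \<rho> + 2 * real i"
    using Suc corner_in[of n "zs!i"] by auto
  show ?case using near_ball[OF nr] ball_sub0[of "corner n (zs!i)" 2] c by force
qed

lemma finite_chainL: "finite (chainL n \<rho> m)"
proof -
  have "chainL n \<rho> m \<subseteq> {xs. set xs \<subseteq> {z. cube n z \<subseteq> ball 0 (1 + \<rho> + 2 * real m)} \<and> length xs = m}"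
  proof
    fix zs assume zs: "zs \<in> chainL n \<rho> m"
    have "cube n z \<subseteq> ball 0 (1 + \<rho> + 2 * real m)" if z: "z \<in> set zs" for z
    proof -
      obtain i where i: "i < m" "z = zs!i" using zs z by (auto simp: chainL_def in_set_conv_nth)
      then show ?thesis using chain_ball[OF zs i(1)] by force
    qed
    then show "zs \<in> {xs. set xs \<subseteq> {z. cube n z \<subseteq> ball 0 (1 + \<rho> + 2 * real m)} \<and> length xs = m}"
      using zs by (auto simp: chainL_def)
  qed
  then show ?thesis by (rule finite_subset) (intro finite_lists_length_eq finite_cubes_in_ball)
qed

lemma chainL_Suc:
  assumes m: "m \<ge> 1"
  shows "chainL n \<rho> (Suc m) = (\<lambda>(zs,u). zs @ [u]) ` (SIGMA zs:chainL n \<rho> m. {u. near n 2 (zs!(m-1)) u})"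
proof
  show "(\<lambda>(zs,u). zs @ [u]) ` (SIGMA zs:chainL n \<rho> m. {u. near n 2 (zs!(m-1)) u}) \<subseteq> chainL n \<rho> (Suc m)"
  proof
    fix x assume "x \<in> (\<lambda>(zs,u). zs @ [u]) ` (SIGMA zs:chainL n \<rho> m. {u. near n 2 (zs!(m-1)) u})"
    then obtain zs u where x: "x = zs @ [u]" and zs: "zs \<in> chainL n \<rho> m" and u: "u \<in> {u. near n 2 (zs!(m-1)) u}"
      by auto
    have l: "length zs = m" using zs by (simp add: chainL_def)
    have "(zs @ [u])!0 = zs!0" using l m by (simp add: nth_append)
    moreover have "near n 2 ((zs @ [u])!i) ((zs @ [u])!Suc i)" if "Suc i < Suc m" for i
    proof (cases "Suc i < m")
      case True
      then show ?thesis using zs l by (simp add: nth_append chainL_def)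
    next
      case False
      then have "i = m - 1" using that by simp
      then show ?thesis using u l m by (simp add: nth_append)
    qed
    ultimately show "x \<in> chainL n \<rho> (Suc m)" using zs l x by (simp add: chainL_def)
  qed
next
  show "chainL n \<rho> (Suc m) \<subseteq> (\<lambda>(zs,u). zs @ [u]) ` (SIGMA zs:chainL n \<rho> m. {u. near n 2 (zs!(m-1)) u})"
  proof
    fix zs' assume zs': "zs' \<in> chainL n \<rho> (Suc m)"
    have l: "length zs' = Suc m" using zs' by (simp add: chainL_def)
    then have ne: "zs' \<noteq> []" by auto
    define zs where "zs = butlast zs'"
    define u where "u = last zs'"
    have eq: "zs' = zs @ [u]" using ne by (simp add: zs_def u_def)
    have lz: "length zs = m" using l by (simp add: zs_def)
    have nth: "zs!i = zs'!i" if "i < m" for i using that lz by (simp add: zs_def nth_butlast)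
    have "zs \<in> chainL n \<rho> m"
      using zs' m nth lz by (auto simp: chainL_def)
    moreover have "near n 2 (zs!(m-1)) u"
    proof -
      have A: "\<forall>i. Suc i < Suc m \<longrightarrow> near n 2 (zs'!i) (zs'!Suc i)" using zs' by (simp add: chainL_def)
      have "near n 2 (zs'!(m-1)) (zs'!Suc (m-1))" using A[rule_format, of "m-1"] m by simp
      moreover have "u = zs'!m" using l ne unfolding u_def by (subst last_conv_nth) auto
      ultimately show ?thesis using nth[of "m-1"] m by simp
    qed
    ultimately show "zs' \<in> (\<lambda>(zs,u). zs @ [u]) ` (SIGMA zs:chainL n \<rho> m. {u. near n 2 (zs!(m-1)) u})"
      using eq by force
  qed
qed

lemma chainL_1: "chainL n \<rho> 1 = (\<lambda>u. [u]) ` {u. startc n (1 + \<rho>) u}"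
proof
  show "chainL n \<rho> 1 \<subseteq> (\<lambda>u. [u]) ` {u. startc n (1 + \<rho>) u}"
  proof
    fix zs assume zs: "zs \<in> chainL n \<rho> 1"
    then have "length zs = 1" by (simp add: chainL_def)
    then obtain u where "zs = [u]" by (cases zs) auto
    then show "zs \<in> (\<lambda>u. [u]) ` {u. startc n (1 + \<rho>) u}" using zs by (auto simp: chainL_def)
  qed
qed (auto simp: chainL_def)

lemma chain_sum_le:
  fixes n :: nat
  assumes m: "m \<ge> 1" and \<rho>: "\<rho> \<ge> 0"
  shows "(\<Sum>zs\<in>(chainL n \<rho> m :: ('d::finite \<Rightarrow> int) list set). \<Prod>i<m. measure lborel (cube n (zs!i)))
     \<le> (unit_ball_vol TYPE('d) * (1 + \<rho>) ^ CARD('d)) * (unit_ball_vol TYPE('d) * 2 ^ CARD('d)) ^ (m - 1)"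
  using m
proof (induction m rule: nat_induct_at_least)
  case base
  have "(\<Sum>zs\<in>(chainL n \<rho> 1 :: ('d \<Rightarrow> int) list set). \<Prod>i<1. measure lborel (cube n (zs!i)))
      = (\<Sum>u\<in>{u::'d \<Rightarrow> int. startc n (1 + \<rho>) u}. measure lborel (cube n u))"
    unfolding chainL_1 by (subst sum.reindex) (auto simp: inj_on_def)
  also have "\<dots> \<le> unit_ball_vol TYPE('d) * (1 + \<rho>) ^ CARD('d)"
    by (rule sum_startc_le) (use \<rho> in simp)
  finally show ?case by simp
next
  case (Suc m)
  let ?mu = "\<lambda>u::'d \<Rightarrow> int. measure lborel (cube n u)"
  let ?V1 = "unit_ball_vol TYPE('d) * (1 + \<rho>) ^ CARD('d)"
  let ?V2 = "unit_ball_vol TYPE('d) * 2 ^ CARD('d)"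
  have inj: "inj_on (\<lambda>(zs,u). zs @ [u]) (SIGMA zs:chainL n \<rho> m. {u::'d \<Rightarrow> int. near n 2 (zs!(m-1)) u})"
    by (auto simp: inj_on_def)
  have "(\<Sum>zs\<in>(chainL n \<rho> (Suc m) :: ('d \<Rightarrow> int) list set). \<Prod>i<Suc m. ?mu (zs!i))
     = (\<Sum>(zs,u)\<in>(SIGMA zs:(chainL n \<rho> m :: ('d \<Rightarrow> int) list set). {u. near n 2 (zs!(m-1)) u}). \<Prod>i<Suc m. ?mu ((zs @ [u])!i))"
    unfolding chainL_Suc[OF Suc(1)] by (subst sum.reindex[OF inj]) (simp add: case_prod_beta)
  also have "\<dots> = (\<Sum>zs\<in>(chainL n \<rho> m :: ('d \<Rightarrow> int) list set). \<Sum>u\<in>{u. near n 2 (zs!(m-1)) u}. \<Prod>i<Suc m. ?mu ((zs @ [u])!i))"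
    by (rule sum.Sigma[symmetric]) (auto simp: finite_chainL finite_near)
  also have "\<dots> = (\<Sum>zs\<in>(chainL n \<rho> m :: ('d \<Rightarrow> int) list set). (\<Prod>i<m. ?mu (zs!i)) * (\<Sum>u\<in>{u. near n 2 (zs!(m-1)) u}. ?mu u))"
  proof (rule sum.cong[OF refl])
    fix zs :: "('d \<Rightarrow> int) list" assume zs: "zs \<in> chainL n \<rho> m"
    then have l: "length zs = m" by (simp add: chainL_def)
    have "(\<Prod>i<Suc m. ?mu ((zs @ [u])!i)) = (\<Prod>i<m. ?mu (zs!i)) * ?mu u" for u
      using l by (simp add: nth_append)
    then show "(\<Sum>u\<in>{u. near n 2 (zs!(m-1)) u}. \<Prod>i<Suc m. ?mu ((zs @ [u])!i))
        = (\<Prod>i<m. ?mu (zs!i)) * (\<Sum>u\<in>{u. near n 2 (zs!(m-1)) u}. ?mu u)"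
      by (simp add: sum_distrib_left)
  qed
  also have "\<dots> \<le> (\<Sum>zs\<in>(chainL n \<rho> m :: ('d \<Rightarrow> int) list set). (\<Prod>i<m. ?mu (zs!i)) * ?V2)"
    by (intro sum_mono mult_left_mono sum_near_le prod_nonneg) auto
  also have "\<dots> = (\<Sum>zs\<in>(chainL n \<rho> m :: ('d \<Rightarrow> int) list set). (\<Prod>i<m. ?mu (zs!i))) * ?V2"
    by (simp add: sum_distrib_right)
  also have "\<dots> \<le> (?V1 * ?V2 ^ (m - 1)) * ?V2"
    by (intro mult_right_mono Suc(2)) (use unit_ball_vol_pos'[where 'd='d] in simp)
  also have "\<dots> = ?V1 * ?V2 ^ (Suc m - 1)"
    using Suc(1) by (cases m) (auto simp: algebra_simps)
  finally show ?case .
qed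

definition cnt :: "(real^'d::finite) set \<Rightarrow> nat \<Rightarrow> ('d \<Rightarrow> int) \<Rightarrow> ennreal" where
  "cnt S n u = ennreal (real (card (S \<inter> cube n u)))"

definition Idx :: "nat \<Rightarrow> real \<Rightarrow> nat \<Rightarrow> (('d::finite \<Rightarrow> int) list \<times> ('d \<Rightarrow> int)) set" where
  "Idx n \<rho> k = (SIGMA zs:{zs \<in> chainL n \<rho> k. distinct zs}. {w. near n (1 + \<rho>) (zs!(k-1)) w})"

definition Tsum :: "nat \<Rightarrow> real \<Rightarrow> nat \<Rightarrow> (real^'d::finite) set \<Rightarrow> (real^'d) set \<Rightarrow> ennreal" where
  "Tsum n \<rho> k S1 S2 = (\<Sum>p\<in>Idx n \<rho> k. (\<Prod>i<k. cnt S1 n (fst p ! i)) * cnt S2 n (snd p))"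

lemma finite_Idx: "finite (Idx n \<rho> k)"
  unfolding Idx_def by (intro finite_SigmaI) (auto intro: finite_subset[OF _ finite_chainL] simp: finite_near)

lemma D_ev:
  assumes "\<epsilon> > 0"
  shows "eventually (\<lambda>n. 2 * (real CARD('d::finite) / 2^n) < \<epsilon>) sequentially"
proof -
  have "(\<lambda>n. real CARD('d) / 2^n) \<longlonglongrightarrow> 0" by (rule LIMSEQ_divide_realpow_zero) simp
  then have "(\<lambda>n. 2 * (real CARD('d) / 2^n)) \<longlonglongrightarrow> 2 * 0" by (intro tendsto_mult tendsto_const)
  then show ?thesis using assms by (intro order_tendstoD(2)) auto
qed

lemma cnt_ge1:
  assumes "a \<in> S" "finite (S \<inter> cube n (cidx n a))"
  shows "1 \<le> cnt S n (cidx n a)"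
proof -
  have "a \<in> S \<inter> cube n (cidx n a)" using assms cidx_in by blast
  then have "card (S \<inter> cube n (cidx n a)) \<ge> 1" using assms(2)
    by (metis One_nat_def Suc_leI card_gt_0_iff empty_iff)
  then show ?thesis by (simp add: cnt_def)
qed

lemma count_eventually:
  fixes S1 S2 :: "(real^'d::finite) set"
  assumes fin1: "\<And>B. bounded B \<Longrightarrow> finite (S1 \<inter> B)" and fin2: "\<And>B. bounded B \<Longrightarrow> finite (S2 \<inter> B)"
    and k: "k \<ge> 1"
  shows "eventually (\<lambda>n. ennreal (real (Nk \<rho> k S1 S2)) \<le> Tsum n \<rho> k S1 S2) sequentially"
proof -
  define P where "P y x \<longleftrightarrow> inj_on x {1..k} \<and> (\<forall>i\<in>{1..k}. x i \<in> S1) \<and> norm (x 1) < 1 + \<rho> \<and>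
       (\<forall>i\<in>{1..k-1}. norm (x (i+1) - x i) < 2) \<and> norm (y - x k) < 1 + \<rho>" for y and x :: "nat \<Rightarrow> real^'d"
  define F where "F = {y \<in> S2. \<exists>x. P y x}"
  have NF: "Nk \<rho> k S1 S2 = card F" by (simp add: Nk_def F_def P_def)
  show ?thesis
  proof (cases "finite F")
    case False
    then show ?thesis by (simp add: NF)
  next
    case True
    define xs where "xs y = (SOME x. P y x)" for y
    have xsP: "P y (xs y)" if "y \<in> F" for y
    proof -
      from that obtain x where "P y x" unfolding F_def by auto
      then show ?thesis unfolding xs_def by (rule someI[of "P y"])
    qed
    define D where "D n = real CARD('d) / 2^n" for n :: nat
    have Dpos: "D n > 0" for n by (simp add: D_def)
    have diam: "norm (p - a) \<le> D n" if "p \<in> cube n (cidx n a)" for n and p a :: "real^'d"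
      using cube_diam[OF that cidx_in] by (simp add: D_def)
    have same: "norm (a - b) \<le> D n" if "cidx n a = cidx n b" for n and a b :: "real^'d"
      using diam[of b n a] cidx_in[of b n] that by (simp add: norm_minus_commute)
    have evp: "eventually (\<lambda>n. 2 * D n < \<epsilon>) sequentially" if "\<epsilon> > 0" for \<epsilon>
      using D_ev[OF that, where 'd='d] by (simp add: D_def)
    have evi: "eventually (\<lambda>n. Q \<longrightarrow> 2 * D n < \<epsilon>) sequentially" if "Q \<Longrightarrow> \<epsilon> > 0" for Q \<epsilon>
      using that by (cases Q) (auto intro: evp)
    have ev: "eventually (\<lambda>n.
        (\<forall>y\<in>F. \<forall>y'\<in>F. y \<noteq> y' \<longrightarrow> 2 * D n < norm (y - y')) \<and>
        (\<forall>y\<in>F. \<forall>i\<in>{1..k}. \<forall>j\<in>{1..k}. i \<noteq> j \<longrightarrow> 2 * D n < norm (xs y i - xs y j)) \<and>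
        (\<forall>y\<in>F. 2 * D n < 1 + \<rho> - norm (xs y 1)) \<and>
        (\<forall>y\<in>F. \<forall>i\<in>{1..k-1}. 2 * D n < 2 - norm (xs y (i+1) - xs y i)) \<and>
        (\<forall>y\<in>F. 2 * D n < 1 + \<rho> - norm (y - xs y k))) sequentially"
    proof -
      have e1: "eventually (\<lambda>n. \<forall>y\<in>F. \<forall>y'\<in>F. y \<noteq> y' \<longrightarrow> 2 * D n < norm (y - y')) sequentially"
      proof (rule eventually_ball_finite[OF True], rule ballI)
        fix y assume "y \<in> F"
        show "eventually (\<lambda>n. \<forall>y'\<in>F. y \<noteq> y' \<longrightarrow> 2 * D n < norm (y - y')) sequentially"
        proof (rule eventually_ball_finite[OF True], rule ballI)
          fix y' show "eventually (\<lambda>n. y \<noteq> y' \<longrightarrow> 2 * D n < norm (y - y')) sequentially"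
            by (rule evi) simp
        qed
      qed
      have e2: "eventually (\<lambda>n. \<forall>y\<in>F. \<forall>i\<in>{1..k}. \<forall>j\<in>{1..k}. i \<noteq> j \<longrightarrow> 2 * D n < norm (xs y i - xs y j)) sequentially"
      proof (rule eventually_ball_finite[OF True], rule ballI)
        fix y assume y: "y \<in> F"
        show "eventually (\<lambda>n. \<forall>i\<in>{1..k}. \<forall>j\<in>{1..k}. i \<noteq> j \<longrightarrow> 2 * D n < norm (xs y i - xs y j)) sequentially"
        proof (rule eventually_ball_finite[OF finite_atLeastAtMost], rule ballI)
          fix i assume i: "i \<in> {1..k}"
          show "eventually (\<lambda>n. \<forall>j\<in>{1..k}. i \<noteq> j \<longrightarrow> 2 * D n < norm (xs y i - xs y j)) sequentially"
          proof (rule eventually_ball_finite[OF finite_atLeastAtMost], rule ballI)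
            fix j assume j: "j \<in> {1..k}"
            show "eventually (\<lambda>n. i \<noteq> j \<longrightarrow> 2 * D n < norm (xs y i - xs y j)) sequentially"
            proof (rule evi)
              assume "i \<noteq> j"
              then have "xs y i \<noteq> xs y j" using xsP[OF y] i j unfolding P_def inj_on_def by blast
              then show "norm (xs y i - xs y j) > 0" by simp
            qed
          qed
        qed
      qed
      have e3: "eventually (\<lambda>n. \<forall>y\<in>F. 2 * D n < 1 + \<rho> - norm (xs y 1)) sequentially"
      proof (rule eventually_ball_finite[OF True], rule ballI)
        fix y assume y: "y \<in> F"
        show "eventually (\<lambda>n. 2 * D n < 1 + \<rho> - norm (xs y 1)) sequentially"
          using xsP[OF y] unfolding P_def by (intro evp) linarith
      qed
      have e4: "eventually (\<lambda>n. \<forall>y\<in>F. \<forall>i\<in>{1..k-1}. 2 * D n < 2 - norm (xs y (i+1) - xs y i)) sequentially"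
      proof (rule eventually_ball_finite[OF True], rule ballI)
        fix y assume y: "y \<in> F"
        show "eventually (\<lambda>n. \<forall>i\<in>{1..k-1}. 2 * D n < 2 - norm (xs y (i+1) - xs y i)) sequentially"
        proof (rule eventually_ball_finite[OF finite_atLeastAtMost], rule ballI)
          fix i assume i: "i \<in> {1..k-1}"
          have "norm (xs y (i+1) - xs y i) < 2" using xsP[OF y] i unfolding P_def by blast
          then show "eventually (\<lambda>n. 2 * D n < 2 - norm (xs y (i+1) - xs y i)) sequentially"
            by (intro evp) linarith
        qed
      qed
      have e5: "eventually (\<lambda>n. \<forall>y\<in>F. 2 * D n < 1 + \<rho> - norm (y - xs y k)) sequentially"
      proof (rule eventually_ball_finite[OF True], rule ballI)
        fix y assume y: "y \<in> F"
        show "eventually (\<lambda>n. 2 * D n < 1 + \<rho> - norm (y - xs y k)) sequentially"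
          using xsP[OF y] unfolding P_def by (intro evp) linarith
      qed
      show ?thesis using e1 e2 e3 e4 e5 by (intro eventually_conj)
    qed
    show ?thesis
    proof (rule eventually_mono[OF ev], elim conjE)
      fix n
      assume C1: "\<forall>y\<in>F. \<forall>y'\<in>F. y \<noteq> y' \<longrightarrow> 2 * D n < norm (y - y')"
        and C2: "\<forall>y\<in>F. \<forall>i\<in>{1..k}. \<forall>j\<in>{1..k}. i \<noteq> j \<longrightarrow> 2 * D n < norm (xs y i - xs y j)"
        and C3: "\<forall>y\<in>F. 2 * D n < 1 + \<rho> - norm (xs y 1)"
        and C4: "\<forall>y\<in>F. \<forall>i\<in>{1..k-1}. 2 * D n < 2 - norm (xs y (i+1) - xs y i)"
        and C5: "\<forall>y\<in>F. 2 * D n < 1 + \<rho> - norm (y - xs y k)"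
      define zs where "zs y = map (\<lambda>i. cidx n (xs y (Suc i))) [0..<k]" for y
      define g where "g y = (zs y, cidx n y)" for y
      define f where "f p = (\<Prod>i<k. cnt S1 n (fst p ! i)) * cnt S2 n (snd p)" for p
      have zsl: "length (zs y) = k" for y by (simp add: zs_def)
      have zsn: "zs y ! i = cidx n (xs y (Suc i))" if "i < k" for y i using that by (simp add: zs_def)
      have nearp: "norm (q - p) < r"
        if "p \<in> cube n (cidx n a)" "q \<in> cube n (cidx n b)" "2 * D n < r - norm (b - a)" for p q a b :: "real^'d" and r
      proof -
        have e: "q - p = (q - b) + (b - a) + (a - p)" by simp
        have "norm (q - p) \<le> norm ((q - b) + (b - a)) + norm (a - p)"
          unfolding e by (rule norm_triangle_ineq)
        also have "\<dots> \<le> norm (q - b) + norm (b - a) + norm (a - p)"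
          using norm_triangle_ineq[of "q - b" "b - a"] by simp
        finally have "norm (q - p) \<le> norm (q - b) + norm (b - a) + norm (a - p)" .
        also have "\<dots> \<le> D n + norm (b - a) + D n"
          using diam[OF that(1)] diam[OF that(2)] by (simp add: norm_minus_commute)
        finally show ?thesis using that(3) by simp
      qed
      have gI: "g y \<in> Idx n \<rho> k" if y: "y \<in> F" for y
      proof -
        have Py: "P y (xs y)" by (rule xsP[OF y])
        have "startc n (1 + \<rho>) (zs y ! 0)"
          unfolding startc_def
        proof
          fix p assume p: "p \<in> cube n (zs y ! 0)"
          then have "p \<in> cube n (cidx n (xs y 1))" using zsn[of 0 y] k by simp
          then have "norm (p - xs y 1) \<le> D n" by (rule diam)
          moreover have "norm p \<le> norm (p - xs y 1) + norm (xs y 1)" using norm_triangle_ineq[of "p - xs y 1" "xs y 1"] by simp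
          moreover have "2 * D n < 1 + \<rho> - norm (xs y 1)" using C3 y by blast
          ultimately show "norm p < 1 + \<rho>" using Dpos[of n] by linarith
        qed
        moreover have "near n 2 (zs y ! i) (zs y ! Suc i)" if i: "Suc i < k" for i
          unfolding near_def
        proof (intro ballI)
          fix p q assume p: "p \<in> cube n (zs y ! i)" and q: "q \<in> cube n (zs y ! Suc i)"
          have "2 * D n < 2 - norm (xs y (Suc i + 1) - xs y (Suc i))"
            using C4 y i by auto
          then show "norm (q - p) < 2"
            using nearp[of p "xs y (Suc i)" q "xs y (Suc (Suc i))" 2] p q zsn[of i y] zsn[of "Suc i" y] i by simp
        qed
        moreover have "distinct (zs y)"
          unfolding distinct_conv_nth zsl
        proof (intro allI impI)
          fix i j assume ij: "i < k" "j < k" "i \<noteq> j"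
          show "zs y ! i \<noteq> zs y ! j"
          proof
            assume "zs y ! i = zs y ! j"
            then have "norm (xs y (Suc i) - xs y (Suc j)) \<le> D n" using same ij zsn by simp
            moreover have "2 * D n < norm (xs y (Suc i) - xs y (Suc j))" using C2 y ij by auto
            ultimately show False using Dpos[of n] by simp
          qed
        qed
        moreover have "near n (1 + \<rho>) (zs y ! (k - 1)) (cidx n y)"
          unfolding near_def
        proof (intro ballI)
          fix p q assume p: "p \<in> cube n (zs y ! (k - 1))" and q: "q \<in> cube n (cidx n y)"
          have "zs y ! (k - 1) = cidx n (xs y k)" using zsn[of "k - 1" y] k by simp
          then show "norm (q - p) < 1 + \<rho>"
            using nearp[of p "xs y k" q y "1 + \<rho>"] p q C5 y by simp
        qed
        ultimately show ?thesis by (simp add: g_def Idx_def chainL_def zsl)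
      qed
      have inj: "inj_on g F"
      proof
        fix y y' assume y: "y \<in> F" and y': "y' \<in> F" and e: "g y = g y'"
        show "y = y'"
        proof (rule ccontr)
          assume ne: "y \<noteq> y'"
          have "norm (y - y') \<le> D n" using e same by (simp add: g_def)
          moreover have "2 * D n < norm (y - y')" using C1 y y' ne by auto
          ultimately show False using Dpos[of n] by simp
        qed
      qed
      have f1: "1 \<le> f (g y)" if y: "y \<in> F" for y
      proof -
        have Py: "P y (xs y)" by (rule xsP[OF y])
        have "1 \<le> (\<Prod>i<k. cnt S1 n (zs y ! i))"
        proof (rule prod_ge_1)
          fix i assume "i \<in> {..<k}"
          then have "xs y (Suc i) \<in> S1" "zs y ! i = cidx n (xs y (Suc i))" using Py zsn by (auto simp: P_def)
          then show "1 \<le> cnt S1 n (zs y ! i)" using cnt_ge1[OF _ fin1[OF cube_bounded]] by simp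
        qed
        moreover have "1 \<le> cnt S2 n (cidx n y)"
          using cnt_ge1[of y S2 n] fin2[OF cube_bounded] y by (simp add: F_def)
        ultimately have "1 * 1 \<le> (\<Prod>i<k. cnt S1 n (zs y ! i)) * cnt S2 n (cidx n y)"
          by (intro mult_mono) auto
        then show ?thesis by (simp add: f_def g_def)
      qed
      have "ennreal (real (card F)) = (\<Sum>p\<in>g ` F. 1)"
        using card_image[OF inj] by (simp add: ennreal_of_nat_eq_real_of_nat)
      also have "\<dots> \<le> (\<Sum>p\<in>g ` F. f p)"
        by (rule sum_mono) (use f1 in auto)
      also have "\<dots> \<le> (\<Sum>p\<in>Idx n \<rho> k. f p)"
        by (rule sum_mono2[OF finite_Idx]) (use gI in auto)
      finally show "ennreal (real (Nk \<rho> k S1 S2)) \<le> Tsum n \<rho> k S1 S2"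
        by (simp add: NF Tsum_def f_def)
    qed
  qed
qed

lemma cnt_meas:
  assumes H: "indep_PPP2 M X Y l1 l2"
  shows "(\<lambda>\<omega>. cnt (X \<omega>) n u) \<in> borel_measurable M" "(\<lambda>\<omega>. cnt (Y \<omega>) n u) \<in> borel_measurable M"
proof -
  have m: "(\<lambda>x::nat. ennreal (real x)) \<in> measurable (count_space UNIV) borel" by simp
  show "(\<lambda>\<omega>. cnt (X \<omega>) n u) \<in> borel_measurable M"
    using measurable_compose[OF ppp_single(1)[OF H cube_sets cube_bounded] m] by (simp add: cnt_def)
  show "(\<lambda>\<omega>. cnt (Y \<omega>) n u) \<in> borel_measurable M"
    using measurable_compose[OF ppp_single(2)[OF H cube_sets cube_bounded] m] by (simp add: cnt_def)
qed

lemma Tsum_meas: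
  assumes H: "indep_PPP2 M X Y l1 l2"
  shows "(\<lambda>\<omega>. Tsum n \<rho> k (X \<omega>) (Y \<omega>)) \<in> borel_measurable M"
  using cnt_meas[OF H] unfolding Tsum_def by measurable

lemma single_term:
  fixes zs :: "('d::finite \<Rightarrow> int) list" and X Y :: "'a \<Rightarrow> (real^'d) set"
  assumes H: "indep_PPP2 M X Y l1 l2" and l: "l1 \<ge> 0" "l2 \<ge> 0"
    and zs: "distinct zs" "length zs = k"
  shows "(\<integral>\<^sup>+\<omega>. (\<Prod>i<k. cnt (X \<omega>) n (zs!i)) * cnt (Y \<omega>) n w \<partial>M)
       = ennreal ((\<Prod>i<k. l1 * measure lborel (cube n (zs!i))) * (l2 * measure lborel (cube n w)))"
proof -
  have dist: "cube n (zs!i) \<inter> cube n (zs!j) = {}" if "i < k" "j < k" "i \<noteq> j" for i j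
    using that zs by (intro cube_disj) (simp add: nth_eq_iff_index_eq)
  have "(\<integral>\<^sup>+\<omega>. (\<Prod>i<k. cnt (X \<omega>) n (zs!i)) * cnt (Y \<omega>) n w \<partial>M)
       = (\<Prod>i<k. ennreal (l1 * measure lborel (cube n (zs!i)))) * ennreal (l2 * measure lborel (cube n w))"
  proof (cases "w \<in> set zs")
    case True
    then obtain j where j: "j < k" "zs!j = w" using zs by (auto simp: in_set_conv_nth)
    define A where "A i = cube n (zs!i)" for i
    have "(\<integral>\<^sup>+\<omega>. (\<Prod>i\<in>{..<k}. ennreal (real (card (X \<omega> \<inter> A i)))) * ennreal (real (card (Y \<omega> \<inter> A j))) \<partial>M)
       = (\<Prod>i\<in>{..<k}. ennreal (l1 * measure lborel (A i))) * ennreal (l2 * measure lborel (A j))"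
      by (rule ppp_prod_mean[OF H l]) (use j dist in \<open>auto simp: A_def cube_sets cube_sets_borel cube_bounded disjoint_family_on_def\<close>)
    then show ?thesis using j by (simp add: A_def cnt_def)
  next
    case False
    define A where "A i = (if i < k then cube n (zs!i) else cube n w)" for i
    have dist2: "cube n (zs!i) \<inter> cube n w = {}" if "i < k" for i
      using False that zs by (intro cube_disj) auto
    have "(\<integral>\<^sup>+\<omega>. (\<Prod>i\<in>{..<k}. ennreal (real (card (X \<omega> \<inter> A i)))) * ennreal (real (card (Y \<omega> \<inter> A k))) \<partial>M)
       = (\<Prod>i\<in>{..<k}. ennreal (l1 * measure lborel (A i))) * ennreal (l2 * measure lborel (A k))"
    proof (rule ppp_prod_mean[OF H l])
      show "disjoint_family_on A {..<Suc k}"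
        unfolding disjoint_family_on_def
      proof (intro ballI impI)
        fix i j assume "i \<in> {..<Suc k}" "j \<in> {..<Suc k}" "i \<noteq> j"
        then show "A i \<inter> A j = {}" using dist dist2 by (auto simp: A_def Int_commute)
      qed
    qed (auto simp: A_def cube_sets cube_sets_borel cube_bounded)
    then show ?thesis by (simp add: A_def cnt_def)
  qed
  also have "\<dots> = ennreal ((\<Prod>i<k. l1 * measure lborel (cube n (zs!i))) * (l2 * measure lborel (cube n w)))"
  proof -
    have "(\<Prod>i<k. ennreal (l1 * measure lborel (cube n (zs!i)))) = ennreal (\<Prod>i<k. l1 * measure lborel (cube n (zs!i)))"
      by (rule prod_ennreal) (use l in auto)
    moreover have "0 \<le> (\<Prod>i<k. l1 * measure lborel (cube n (zs!i)))" using l by (intro prod_nonneg) auto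
    moreover have "0 \<le> l2 * measure lborel (cube n w)" using l by simp
    ultimately show ?thesis by (simp only: ennreal_mult)
  qed
  finally show ?thesis .
qed

lemma real_bound:
  fixes n :: nat
  assumes l: "l1 \<ge> 0" "l2 \<ge> 0" and k: "k \<ge> 1" and \<rho>: "\<rho> \<ge> 0"
  shows "(\<Sum>p\<in>(Idx n \<rho> k :: (('d::finite \<Rightarrow> int) list \<times> ('d \<Rightarrow> int)) set).
            (\<Prod>i<k. l1 * measure lborel (cube n (fst p ! i))) * (l2 * measure lborel (cube n (snd p))))
    \<le> l1 ^ k * l2 * (unit_ball_vol TYPE('d) * (1 + \<rho>) ^ CARD('d)) *
        ((unit_ball_vol TYPE('d) * (1 + \<rho>) ^ CARD('d)) * (unit_ball_vol TYPE('d) * 2 ^ CARD('d)) ^ (k - 1))"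
proof -
  let ?mu = "\<lambda>u::'d \<Rightarrow> int. measure lborel (cube n u)"
  let ?V1 = "unit_ball_vol TYPE('d) * (1 + \<rho>) ^ CARD('d)"
  let ?V2 = "unit_ball_vol TYPE('d) * 2 ^ CARD('d)"
  let ?DC = "{zs \<in> (chainL n \<rho> k :: ('d \<Rightarrow> int) list set). distinct zs}"
  have pr: "(\<Prod>i<k. l1 * ?mu (zs ! i)) = l1 ^ k * (\<Prod>i<k. ?mu (zs ! i))" for zs :: "('d \<Rightarrow> int) list"
    by (simp add: prod.distrib)
  have finDC: "finite ?DC" by (rule finite_subset[OF _ finite_chainL]) auto
  have "(\<Sum>p\<in>(Idx n \<rho> k :: (('d \<Rightarrow> int) list \<times> ('d \<Rightarrow> int)) set).
            (\<Prod>i<k. l1 * ?mu (fst p ! i)) * (l2 * ?mu (snd p)))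
      = (\<Sum>zs\<in>?DC. \<Sum>w\<in>{w. near n (1 + \<rho>) (zs!(k-1)) w}. (\<Prod>i<k. l1 * ?mu (zs ! i)) * (l2 * ?mu w))"
    unfolding Idx_def by (subst sum.Sigma) (auto simp: finDC finite_near case_prod_beta)
  also have "\<dots> = (\<Sum>zs\<in>?DC. (\<Prod>i<k. l1 * ?mu (zs ! i)) * l2 * (\<Sum>w\<in>{w. near n (1 + \<rho>) (zs!(k-1)) w}. ?mu w))"
    by (simp add: sum_distrib_left mult.assoc)
  also have "\<dots> \<le> (\<Sum>zs\<in>?DC. (\<Prod>i<k. l1 * ?mu (zs ! i)) * l2 * ?V1)"
    by (intro sum_mono mult_left_mono sum_near_le mult_nonneg_nonneg prod_nonneg) (use l \<rho> in auto)
  also have "\<dots> \<le> (\<Sum>zs\<in>chainL n \<rho> k. (\<Prod>i<k. l1 * ?mu (zs ! i)) * l2 * ?V1)"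
    by (rule sum_mono2[OF finite_chainL]) (use l unit_ball_vol_pos'[where 'd='d] \<rho> in \<open>auto intro!: mult_nonneg_nonneg prod_nonneg\<close>)
  also have "\<dots> = l1 ^ k * l2 * ?V1 * (\<Sum>zs\<in>chainL n \<rho> k. \<Prod>i<k. ?mu (zs ! i))"
    by (simp add: pr sum_distrib_left sum_distrib_right mult_ac)
  also have "\<dots> \<le> l1 ^ k * l2 * ?V1 * (?V1 * ?V2 ^ (k - 1))"
    by (intro mult_left_mono chain_sum_le k \<rho>) (use l unit_ball_vol_pos'[where 'd='d] \<rho> in auto)
  finally show ?thesis .
qed

lemma E_Tsum:
  fixes X Y :: "'a \<Rightarrow> (real^'d::finite) set"
  assumes H: "indep_PPP2 M X Y l1 l2" and l: "l1 \<ge> 0" "l2 \<ge> 0" and k: "k \<ge> 1" and \<rho>: "\<rho> \<ge> 0"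
  shows "(\<integral>\<^sup>+\<omega>. Tsum n \<rho> k (X \<omega>) (Y \<omega>) \<partial>M)
    \<le> ennreal (l1 ^ k * l2 * (unit_ball_vol TYPE('d) * (1 + \<rho>) ^ CARD('d)) *
        ((unit_ball_vol TYPE('d) * (1 + \<rho>) ^ CARD('d)) * (unit_ball_vol TYPE('d) * 2 ^ CARD('d)) ^ (k - 1)))"
proof -
  let ?t = "\<lambda>p::('d \<Rightarrow> int) list \<times> ('d \<Rightarrow> int). (\<Prod>i<k. l1 * measure lborel (cube n (fst p ! i))) * (l2 * measure lborel (cube n (snd p)))"
  have "(\<integral>\<^sup>+\<omega>. Tsum n \<rho> k (X \<omega>) (Y \<omega>) \<partial>M)
      = (\<Sum>p\<in>Idx n \<rho> k. \<integral>\<^sup>+\<omega>. (\<Prod>i<k. cnt (X \<omega>) n (fst p ! i)) * cnt (Y \<omega>) n (snd p) \<partial>M)"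
    unfolding Tsum_def by (rule nn_integral_sum) (use cnt_meas[OF H] in measurable)
  also have "\<dots> = (\<Sum>p\<in>Idx n \<rho> k. ennreal (?t p))"
  proof (rule sum.cong[OF refl])
    fix p assume "p \<in> (Idx n \<rho> k :: (('d \<Rightarrow> int) list \<times> ('d \<Rightarrow> int)) set)"
    then have "distinct (fst p)" "length (fst p) = k" by (auto simp: Idx_def chainL_def)
    then show "(\<integral>\<^sup>+\<omega>. (\<Prod>i<k. cnt (X \<omega>) n (fst p ! i)) * cnt (Y \<omega>) n (snd p) \<partial>M) = ennreal (?t p)"
      by (rule single_term[OF H l])
  qed
  also have "\<dots> = ennreal (\<Sum>p\<in>Idx n \<rho> k. ?t p)"
    by (rule sum_ennreal) (use l in \<open>auto intro!: mult_nonneg_nonneg prod_nonneg\<close>)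
  also have "\<dots> \<le> ennreal (l1 ^ k * l2 * (unit_ball_vol TYPE('d) * (1 + \<rho>) ^ CARD('d)) *
        ((unit_ball_vol TYPE('d) * (1 + \<rho>) ^ CARD('d)) * (unit_ball_vol TYPE('d) * 2 ^ CARD('d)) ^ (k - 1)))"
    by (rule ennreal_leI, rule real_bound[OF l k \<rho>])
  finally show ?thesis .
qed

lemma arith_final:
  fixes u \<kappa> \<rho> :: real and d j :: nat
  assumes u: "u > 0" and r: "\<rho> > 0"
  defines "l1 \<equiv> \<kappa> ^ d / (u * 2 ^ d)" and "l2 \<equiv> \<kappa> ^ d / (u * 2 ^ d * \<rho> ^ d)"
  shows "l1 ^ Suc j * l2 * (u * (1 + \<rho>) ^ d) * ((u * (1 + \<rho>) ^ d) * (u * 2 ^ d) ^ j)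
       = (\<kappa> ^ (Suc j + 1) * (1 + \<rho>)\<^sup>2 / (4 * \<rho>)) ^ d"
proof -
  have a: "l1 * (u * 2 ^ d) = \<kappa> ^ d" using u by (simp add: l1_def)
  have "l1 ^ Suc j * l2 * (u * (1 + \<rho>) ^ d) * ((u * (1 + \<rho>) ^ d) * (u * 2 ^ d) ^ j)
      = (l1 * (u * 2 ^ d)) ^ j * (l1 * l2 * (u * (1 + \<rho>) ^ d) * (u * (1 + \<rho>) ^ d))"
    by (simp add: power_mult_distrib mult_ac)
  also have "l1 * l2 * (u * (1 + \<rho>) ^ d) * (u * (1 + \<rho>) ^ d) = (\<kappa> ^ d) ^ 2 * ((1 + \<rho>) ^ 2) ^ d / (4 ^ d * \<rho> ^ d)"
  proof -
    have "(4::real) ^ d = 2 ^ d * 2 ^ d" by (simp add: power_mult_distrib[symmetric])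
    moreover have "((1 + \<rho>) ^ 2) ^ d = (1 + \<rho>) ^ d * (1 + \<rho>) ^ d"
      by (simp add: power_mult[symmetric] power2_eq_square power_mult_distrib)
    ultimately show ?thesis using u r by (simp add: l1_def l2_def field_simps power2_eq_square)
  qed
  finally have "l1 ^ Suc j * l2 * (u * (1 + \<rho>) ^ d) * ((u * (1 + \<rho>) ^ d) * (u * 2 ^ d) ^ j)
     = (\<kappa> ^ d) ^ j * ((\<kappa> ^ d) ^ 2 * ((1 + \<rho>) ^ 2) ^ d / (4 ^ d * \<rho> ^ d))"
    unfolding a .
  also have "\<dots> = (\<kappa> ^ (Suc j + 1)) ^ d * ((1 + \<rho>) ^ 2) ^ d / (4 * \<rho>) ^ d"
  proof -
    have e1: "(\<kappa> ^ d) ^ j * (\<kappa> ^ d) ^ 2 = (\<kappa> ^ d) ^ (j + 2)" by (rule power_add[symmetric])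
    have e2: "(\<kappa> ^ d) ^ (j + 2) = (\<kappa> ^ (Suc j + 1)) ^ d"
      unfolding power_mult[symmetric] by (simp add: mult.commute)
    have e3: "(4 * \<rho>) ^ d = 4 ^ d * \<rho> ^ d" by (rule power_mult_distrib)
    show ?thesis unfolding e3 e2[symmetric] e1[symmetric] by simp
  qed
  also have "\<dots> = (\<kappa> ^ (Suc j + 1) * (1 + \<rho>)\<^sup>2 / (4 * \<rho>)) ^ d"
    by (simp add: power_mult_distrib power_divide)
  finally show ?thesis .
qed

theorem lemma2p3:
  fixes M :: "'a measure" and X1 Xr :: "'a \<Rightarrow> (real^'d::finite) set"
    and \<rho> \<kappa> :: real
  assumes "CARD('d) \<ge> 2" and "\<rho> > 1" and "0 < \<kappa>" and "\<kappa> < kappa_c \<rho>"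
    and "indep_PPP2 M X1 Xr
           (\<kappa> ^ CARD('d) / (unit_ball_vol TYPE('d) * 2 ^ CARD('d)))
           (\<kappa> ^ CARD('d) / (unit_ball_vol TYPE('d) * 2 ^ CARD('d) * \<rho> ^ CARD('d)))"
  shows "(\<integral>\<^sup>+ \<omega>. ennreal (real (N0 \<rho> (Xr \<omega>))) \<partial>M) = ennreal (\<kappa> ^ CARD('d))
    \<and> (\<forall>k::nat. k \<ge> 1 \<longrightarrow>
           (\<integral>\<^sup>+ \<omega>. ennreal (real (Nk \<rho> k (X1 \<omega>) (Xr \<omega>))) \<partial>M)
             \<le> ennreal ((\<kappa> ^ (k + 1) * (1 + \<rho>)\<^sup>2 / (4 * \<rho>)) ^ CARD('d)))"
proof -
  define u where "u = unit_ball_vol TYPE('d)"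
  define l1 where "l1 = \<kappa> ^ CARD('d) / (u * 2 ^ CARD('d))"
  define l2 where "l2 = \<kappa> ^ CARD('d) / (u * 2 ^ CARD('d) * \<rho> ^ CARD('d))"
  have H: "indep_PPP2 M X1 Xr l1 l2" using assms(5) by (simp add: l1_def l2_def u_def)
  have u: "u > 0" unfolding u_def by (rule unit_ball_vol_pos')
  have r: "\<rho> > 0" using assms(2) by simp
  have l: "l1 \<ge> 0" "l2 \<ge> 0" using u r assms(3) by (simp_all add: l1_def l2_def)
  interpret prob_space M using H by (simp add: indep_PPP2_def)
  have fin: "\<forall>\<omega>\<in>space M. \<forall>B. bounded B \<longrightarrow> finite (X1 \<omega> \<inter> B) \<and> finite (Xr \<omega> \<inter> B)"
    using H by (simp add: indep_PPP2_def)
  have part1: "(\<integral>\<^sup>+ \<omega>. ennreal (real (N0 \<rho> (Xr \<omega>))) \<partial>M) = ennreal (\<kappa> ^ CARD('d))"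
  proof -
    have eq: "N0 \<rho> S = card (S \<inter> ball 0 (2 * \<rho>))" for S :: "(real^'d) set"
    proof -
      have "{y \<in> S. norm y < 2 * \<rho>} = S \<inter> ball 0 (2 * \<rho>)" by auto
      then show ?thesis by (simp add: N0_def)
    qed
    have "(\<integral>\<^sup>+ \<omega>. ennreal (real (N0 \<rho> (Xr \<omega>))) \<partial>M) = ennreal (l2 * measure lborel (ball (0::real^'d) (2 * \<rho>)))"
      unfolding eq by (rule ppp_mean(2)[OF H l]) auto
    also have "l2 * measure lborel (ball (0::real^'d) (2 * \<rho>)) = \<kappa> ^ CARD('d)"
      using ball_vol[of "2 * \<rho>" "0::real^'d"] r u by (simp add: l2_def u_def power_mult_distrib)
    finally show ?thesis .
  qed
  have part2: "(\<integral>\<^sup>+ \<omega>. ennreal (real (Nk \<rho> k (X1 \<omega>) (Xr \<omega>))) \<partial>M)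
             \<le> ennreal ((\<kappa> ^ (k + 1) * (1 + \<rho>)\<^sup>2 / (4 * \<rho>)) ^ CARD('d))" if k: "k \<ge> 1" for k
  proof -
    let ?T = "\<lambda>n \<omega>. Tsum n \<rho> k (X1 \<omega>) (Xr \<omega>)"
    let ?B = "l1 ^ k * l2 * (unit_ball_vol TYPE('d) * (1 + \<rho>) ^ CARD('d)) *
        ((unit_ball_vol TYPE('d) * (1 + \<rho>) ^ CARD('d)) * (unit_ball_vol TYPE('d) * 2 ^ CARD('d)) ^ (k - 1))"
    have "(\<integral>\<^sup>+ \<omega>. ennreal (real (Nk \<rho> k (X1 \<omega>) (Xr \<omega>))) \<partial>M) \<le> (\<integral>\<^sup>+ \<omega>. liminf (\<lambda>n. ?T n \<omega>) \<partial>M)"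
    proof (rule nn_integral_mono)
      fix \<omega> assume "\<omega> \<in> space M"
      then have "eventually (\<lambda>n. ennreal (real (Nk \<rho> k (X1 \<omega>) (Xr \<omega>))) \<le> ?T n \<omega>) sequentially"
        using fin by (intro count_eventually k) auto
      then show "ennreal (real (Nk \<rho> k (X1 \<omega>) (Xr \<omega>))) \<le> liminf (\<lambda>n. ?T n \<omega>)"
        by (rule Liminf_bounded)
    qed
    also have "\<dots> \<le> liminf (\<lambda>n. \<integral>\<^sup>+ \<omega>. ?T n \<omega> \<partial>M)"
      by (rule nn_integral_liminf) (rule Tsum_meas[OF H])
    also have "\<dots> \<le> limsup (\<lambda>n. \<integral>\<^sup>+ \<omega>. ?T n \<omega> \<partial>M)"
      by (rule Liminf_le_Limsup) simp
    also have "\<dots> \<le> ennreal ?B"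
      by (rule Limsup_bounded, rule always_eventually, rule allI, rule E_Tsum[OF H l k]) (use r in simp)
    also have "?B = (\<kappa> ^ (k + 1) * (1 + \<rho>)\<^sup>2 / (4 * \<rho>)) ^ CARD('d)"
    proof -
      obtain j where j: "k = Suc j" using k by (cases k) auto
      show ?thesis
        using arith_final[OF u r, of \<kappa> "CARD('d)" j] unfolding j l1_def l2_def u_def by simp
    qed
    finally show ?thesis .
  qed
  show ?thesis using part1 part2 by blast
qed

end
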